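(* Let $G=(V,E)$ be an undirected graph (finite or infinite) and let $\widehat A,\widehat B$ be two color classes of $G$. Then $\widehat A=\widehat B$ if and only if $\widetilde A=\widetilde B$.
   Context: A graph $G=(V,E)$ has vertex set $V$ and edge set $E\subseteq V^2$; it is undirected if $E$ is irreflexive and symmetric. Implication classes: on $E$ define $(a,b)\Gamma(a',b')$ iff either $a=a'$ and $(b,b')\notin E$, or $b=b'$ and $(a,a')\notin E$; the classes of the transitive closure $\Gamma^*$ are the implication classes. For an implication class $A$, $A^{-1}=\{(b,a):(a,b)\in A\}$ and the color class is $\widehat A=A\cup A^{-1}$. $\widetilde A$ denotes the set of vertices $a$ such that $(a,b)\in A$ or $(b,a)\in A$ for some $b$ (the vertex set spanned by $\widehat A$). *)

theory Defs
  imports Main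
begin

definition undirected_graph :: "'v set \<Rightarrow> ('v \<times> 'v) set \<Rightarrow> bool" where
  "undirected_graph V E \<longleftrightarrow> E \<subseteq> V \<times> V \<and> irrefl E \<and> sym E"

definition Gamma :: "('v \<times> 'v) set \<Rightarrow> (('v \<times> 'v) \<times> ('v \<times> 'v)) set" where
  "Gamma E = {((a,b),(a',b')). (a,b) \<in> E \<and> (a',b') \<in> E \<and>
      ((a = a' \<and> (b,b') \<notin> E) \<or> (b = b' \<and> (a,a') \<notin> E))}"

definition implication_classes :: "('v \<times> 'v) set \<Rightarrow> ('v \<times> 'v) set set" where
  "implication_classes E = E // ((Gamma E)\<^sup>+)"

definition color_class :: "('v \<times> 'v) set \<Rightarrow> ('v \<times> 'v) set" where
  "color_class A = A \<union> A\<inverse>"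

definition span_vertices :: "('v \<times> 'v) set \<Rightarrow> 'v set" where
  "span_vertices A = {a. \<exists>b. (a,b) \<in> A \<or> (b,a) \<in> A}"

end

theory Submission
  imports Defs
begin

lemma Gamma_mem: "((a,b),(c,d)) \<in> Gamma E \<longleftrightarrow> (a,b) \<in> E \<and> (c,d) \<in> E \<and>
      ((a = c \<and> (b,d) \<notin> E) \<or> (b = d \<and> (a,c) \<notin> E))"
  by (simp add: Gamma_def)

lemma Gamma_E: "(p,q) \<in> Gamma E \<Longrightarrow> p \<in> E \<and> q \<in> E"
  by (cases p; cases q) (simp add: Gamma_mem)

lemma R_E: "(p,q) \<in> (Gamma E)\<^sup>+ \<Longrightarrow> p \<in> E \<and> q \<in> E"
  by (induction rule: trancl_induct) (auto dest: Gamma_E)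

lemma Gamma_refl: "irrefl E \<Longrightarrow> p \<in> E \<Longrightarrow> (p,p) \<in> Gamma E"
  by (cases p) (auto simp: Gamma_mem irrefl_def)

lemma Gamma_sym: "sym E \<Longrightarrow> (p,q) \<in> Gamma E \<Longrightarrow> (q,p) \<in> Gamma E"
  by (cases p; cases q) (auto simp: Gamma_mem dest: symD)

lemma Gamma_swap: "sym E \<Longrightarrow> ((a,b),(c,d)) \<in> Gamma E \<Longrightarrow> ((b,a),(d,c)) \<in> Gamma E"
  by (auto simp: Gamma_mem dest: symD)

lemma R_sym: "sym E \<Longrightarrow> (p,q) \<in> (Gamma E)\<^sup>+ \<Longrightarrow> (q,p) \<in> (Gamma E)\<^sup>+"
proof -
  assume s: "sym E"
  have "sym (Gamma E)" using s Gamma_sym by (metis symI)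
  then have "sym ((Gamma E)\<^sup>+)" by (rule sym_trancl)
  then show "(p,q) \<in> (Gamma E)\<^sup>+ \<Longrightarrow> (q,p) \<in> (Gamma E)\<^sup>+" by (metis symD)
qed

lemma R_swap: assumes sy: "sym E" and r: "(p,q) \<in> (Gamma E)\<^sup>+"
  shows "(prod.swap p, prod.swap q) \<in> (Gamma E)\<^sup>+"
  using r
proof (induction rule: trancl_induct)
  case (base y)
  then show ?case by (cases p; cases y) (auto dest: Gamma_swap[OF sy])
next
  case (step y z)
  then have "(prod.swap y, prod.swap z) \<in> Gamma E" by (cases y; cases z) (auto dest: Gamma_swap[OF sy])
  then show ?case using step by (meson trancl.trancl_into_trancl)
qed

lemma R_refl: "irrefl E \<Longrightarrow> p \<in> E \<Longrightarrow> (p,p) \<in> (Gamma E)\<^sup>+"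
  using Gamma_refl by blast

lemma triangle_step:
  assumes ir: "irrefl E" and sy: "sym E"
    and n1: "((x,y),(x,v)) \<notin> (Gamma E)\<^sup>+" and n2: "((x,y),(v,y)) \<notin> (Gamma E)\<^sup>+"
    and r: "((x,y),(s,t)) \<in> (Gamma E)\<^sup>+"
    and i1: "((v,x),(v,s)) \<in> (Gamma E)\<^sup>+" and i2: "((y,v),(t,v)) \<in> (Gamma E)\<^sup>+"
    and g: "((s,t),(s',t')) \<in> Gamma E"
  shows "((v,x),(v,s')) \<in> (Gamma E)\<^sup>+ \<and> ((y,v),(t',v)) \<in> (Gamma E)\<^sup>+"
proof -
  have vs: "(v,s) \<in> E" using R_E[OF i1] by simp
  have tv: "(t,v) \<in> E" using R_E[OF i2] by simp
  have sv: "(s,v) \<in> E" using vs sy by (meson symD)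
  have vt: "(v,t) \<in> E" using tv sy by (meson symD)
  have st: "(s,t) \<in> E" and st': "(s',t') \<in> E" using Gamma_E[OF g] by auto
  have r': "((x,y),(s',t')) \<in> (Gamma E)\<^sup>+" using r g by (meson trancl.trancl_into_trancl)
  from g consider "s = s'" "(t,t') \<notin> E" | "t = t'" "(s,s') \<notin> E" by (auto simp: Gamma_mem)
  then show ?thesis
  proof cases
    case 1
    have vt': "(v,t') \<in> E"
    proof (rule ccontr)
      assume "(v,t') \<notin> E"
      then have "((s,v),(s',t')) \<in> Gamma E" using sv st' 1 by (simp add: Gamma_mem)
      then have "((s,v),(s',t')) \<in> (Gamma E)\<^sup>+" by blast
      then have a: "((x,y),(s,v)) \<in> (Gamma E)\<^sup>+" using r' R_sym[OF sy] by (meson trancl_trans)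
      have "((x,v),(s,v)) \<in> (Gamma E)\<^sup>+" using R_swap[OF sy i1] by simp
      then have "((x,y),(x,v)) \<in> (Gamma E)\<^sup>+" using a R_sym[OF sy] by (meson trancl_trans)
      then show False using n1 by simp
    qed
    have "((t,v),(t',v)) \<in> Gamma E" using tv vt' sy 1 by (auto simp: Gamma_mem dest: symD)
    then have "((y,v),(t',v)) \<in> (Gamma E)\<^sup>+" using i2 by (meson trancl.trancl_into_trancl)
    then show ?thesis using i1 1 by simp
  next
    case 2
    have vs': "(v,s') \<in> E"
    proof (rule ccontr)
      assume "(v,s') \<notin> E"
      then have "((v,t),(s',t')) \<in> Gamma E" using vt st' 2 by (simp add: Gamma_mem)
      then have "((v,t),(s',t')) \<in> (Gamma E)\<^sup>+" by blast
      then have a: "((x,y),(v,t)) \<in> (Gamma E)\<^sup>+" using r' R_sym[OF sy] by (meson trancl_trans)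
      have "((v,y),(v,t)) \<in> (Gamma E)\<^sup>+" using R_swap[OF sy i2] by simp
      then have "((x,y),(v,y)) \<in> (Gamma E)\<^sup>+" using a R_sym[OF sy] by (meson trancl_trans)
      then show False using n2 by simp
    qed
    have "((v,s),(v,s')) \<in> Gamma E" using vs vs' 2 by (auto simp: Gamma_mem)
    then have "((v,x),(v,s')) \<in> (Gamma E)\<^sup>+" using i1 by (meson trancl.trancl_into_trancl)
    then show ?thesis using i2 2 by simp
  qed
qed

lemma triangle_inv:
  assumes ir: "irrefl E" and sy: "sym E"
    and xy: "(x,y) \<in> E" and xv: "(x,v) \<in> E" and vy: "(v,y) \<in> E"
    and n1: "((x,y),(x,v)) \<notin> (Gamma E)\<^sup>+" and n2: "((x,y),(v,y)) \<notin> (Gamma E)\<^sup>+"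
    and r: "((x,y),q) \<in> (Gamma E)\<^sup>+"
  shows "((v,x),(v,fst q)) \<in> (Gamma E)\<^sup>+ \<and> ((y,v),(snd q,v)) \<in> (Gamma E)\<^sup>+"
  using r
proof (induction rule: trancl_induct)
  case (base q)
  have vx: "(v,x) \<in> E" using xv sy by (meson symD)
  have yv: "(y,v) \<in> E" using vy sy by (meson symD)
  have i1: "((v,x),(v,x)) \<in> (Gamma E)\<^sup>+" using vx R_refl[OF ir] by auto
  have i2: "((y,v),(y,v)) \<in> (Gamma E)\<^sup>+" using yv R_refl[OF ir] by auto
  have r0: "((x,y),(x,y)) \<in> (Gamma E)\<^sup>+" using xy R_refl[OF ir] by auto
  show ?case using triangle_step[OF ir sy n1 n2 r0 i1 i2, of "fst q" "snd q"] base by simp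
next
  case (step p q)
  show ?case using triangle_step[OF ir sy n1 n2, of "fst p" "snd p" "fst q" "snd q"] step by simp
qed

lemma triangle_untouched:
  assumes ir: "irrefl E" and sy: "sym E"
    and xy: "(x,y) \<in> E" and xv: "(x,v) \<in> E" and vy: "(v,y) \<in> E"
    and n1: "((x,y),(x,v)) \<notin> (Gamma E)\<^sup>+" and n2: "((x,y),(v,y)) \<notin> (Gamma E)\<^sup>+"
  shows "((x,y),(v,z)) \<notin> (Gamma E)\<^sup>+ \<and> ((x,y),(z,v)) \<notin> (Gamma E)\<^sup>+"
proof -
  have "(v,v) \<notin> E" using ir by (simp add: irrefl_def)
  then show ?thesis
    using triangle_inv[OF assms, of "(v,z)"] triangle_inv[OF assms, of "(z,v)"] R_E by fastforce
qed

lemma cls_conv: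
  assumes sy: "sym E"
  shows "((Gamma E)\<^sup>+ `` {p})\<inverse> = (Gamma E)\<^sup>+ `` {prod.swap p}"
proof (rule set_eqI)
  fix z :: "'a \<times> 'a"
  obtain u w where z: "z = (u,w)" by (cases z)
  show "z \<in> ((Gamma E)\<^sup>+ `` {p})\<inverse> \<longleftrightarrow> z \<in> (Gamma E)\<^sup>+ `` {prod.swap p}"
    using R_swap[OF sy, of p "(w,u)"] R_swap[OF sy, of "prod.swap p" "(u,w)"] z by auto
qed

lemma cls_eq:
  assumes sy: "sym E" and "q \<in> (Gamma E)\<^sup>+ `` {p}" and "q \<in> (Gamma E)\<^sup>+ `` {p'}"
  shows "(Gamma E)\<^sup>+ `` {p} = (Gamma E)\<^sup>+ `` {p'}"
proof -
  have "(p,p') \<in> (Gamma E)\<^sup>+" using assms R_sym[OF sy] by (meson Image_singleton_iff trancl_trans)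
  then show ?thesis using R_sym[OF sy] by (meson trancl_trans equalityI subsetI Image_singleton_iff)
qed

lemma color_alt:
  assumes sy: "sym E" and A: "A = (Gamma E)\<^sup>+ `` {p}"
  shows "color_class A = color_class ((Gamma E)\<^sup>+ `` {prod.swap p})"
  unfolding color_class_def A cls_conv[OF sy, symmetric] by (simp add: Un_commute)

lemma color_meet:
  assumes sy: "sym E" and A: "A = (Gamma E)\<^sup>+ `` {p}" and B: "B = (Gamma E)\<^sup>+ `` {q}"
    and z: "z \<in> color_class A" "z \<in> color_class B"
  shows "color_class A = color_class B"
proof -
  obtain p1 where p1: "p1 = p \<or> p1 = prod.swap p" and zp: "z \<in> (Gamma E)\<^sup>+ `` {p1}"
  proof -
    have "z \<in> A \<or> z \<in> A\<inverse>" using z(1) unfolding color_class_def by blast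
    then show ?thesis using that cls_conv[OF sy, of p] A by blast
  qed
  obtain q1 where q1: "q1 = q \<or> q1 = prod.swap q" and zq: "z \<in> (Gamma E)\<^sup>+ `` {q1}"
  proof -
    have "z \<in> B \<or> z \<in> B\<inverse>" using z(2) unfolding color_class_def by blast
    then show ?thesis using that cls_conv[OF sy, of q] B by blast
  qed
  have e: "(Gamma E)\<^sup>+ `` {p1} = (Gamma E)\<^sup>+ `` {q1}" using cls_eq[OF sy zp zq] .
  have "color_class A = color_class ((Gamma E)\<^sup>+ `` {p1})"
    using p1 A color_alt[OF sy A] by metis
  moreover have "color_class B = color_class ((Gamma E)\<^sup>+ `` {q1})"
    using q1 B color_alt[OF sy B] by metis
  ultimately show ?thesis using e by simp
qed

lemma span_color: "span_vertices (color_class A) = span_vertices A"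
  unfolding span_vertices_def color_class_def by auto

theorem proposition3p1:
  fixes V :: "'v set" and E :: "('v \<times> 'v) set" and A B :: "('v \<times> 'v) set"
  assumes "undirected_graph V E"
    and "A \<in> implication_classes E"
    and "B \<in> implication_classes E"
  shows "color_class A = color_class B \<longleftrightarrow> span_vertices A = span_vertices B"
proof
  assume "color_class A = color_class B"
  then show "span_vertices A = span_vertices B" by (metis span_color)
next
  assume sp: "span_vertices A = span_vertices B"
  let ?R = "(Gamma E)\<^sup>+"
  have ir: "irrefl E" and sy: "sym E" using assms(1) unfolding undirected_graph_def by auto
  obtain p where pE: "p \<in> E" and A: "A = ?R `` {p}"
    using assms(2) unfolding implication_classes_def by (auto elim: quotientE)
  obtain q where qE: "q \<in> E" and B: "B = ?R `` {q}"
    using assms(3) unfolding implication_classes_def by (auto elim: quotientE)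
  show "color_class A = color_class B"
  proof (rule ccontr)
    assume ne: "color_class A \<noteq> color_class B"
    have disj: "z \<notin> color_class A" if "z \<in> color_class B" for z
      using color_meet[OF sy A B, of z] ne that by auto
    obtain a b where p: "p = (a,b)" by (cases p)
    have abA: "(a,b) \<in> A" using A p pE R_refl[OF ir] by auto
    have "a \<in> span_vertices B" using sp abA unfolding span_vertices_def by auto
    then obtain c where acB: "(a,c) \<in> color_class B"
      unfolding span_vertices_def color_class_def by auto
    have acA: "(a,c) \<notin> color_class A" using disj acB .
    have acE: "(a,c) \<in> E"
    proof -
      have "(a,c) \<in> B \<or> (c,a) \<in> B" using acB unfolding color_class_def by auto
      then have "(a,c) \<in> E \<or> (c,a) \<in> E" using B R_E by blast
      then show ?thesis using sy by (auto dest: symD)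
    qed
    have abE: "(a,b) \<in> E" using pE p by simp
    have cls_ac: "?R `` {(a,c)} = B \<or> ?R `` {(a,c)} = B\<inverse>"
    proof -
      have "(a,c) \<in> B \<or> (a,c) \<in> B\<inverse>" using acB unfolding color_class_def by auto
      then show ?thesis
      proof
        assume "(a,c) \<in> B"
        then show ?thesis using cls_eq[OF sy, of "(a,c)" "(a,c)" q] B R_refl[OF ir acE] by auto
      next
        assume "(a,c) \<in> B\<inverse>"
        then show ?thesis using cls_eq[OF sy, of "(a,c)" "(a,c)" "prod.swap q"] B
            cls_conv[OF sy, of q] R_refl[OF ir acE] by auto
      qed
    qed
    have sub_ac: "?R `` {(a,c)} \<subseteq> color_class B" using cls_ac unfolding color_class_def by auto
    have bcE: "(b,c) \<in> E"
    proof (rule ccontr)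
      assume "(b,c) \<notin> E"
      then have "((a,b),(a,c)) \<in> Gamma E" using abE acE by (simp add: Gamma_mem)
      then have "(a,c) \<in> A" using abA A by (auto intro: trancl_into_trancl)
      then show False using acA unfolding color_class_def by auto
    qed
    have cbE: "(c,b) \<in> E" using bcE sy by (meson symD)
    show False
    proof (cases "(c,b) \<in> A")
      case True
      have n1: "((a,c),(a,b)) \<notin> ?R"
      proof
        assume "((a,c),(a,b)) \<in> ?R"
        then have "(a,b) \<in> color_class B" using sub_ac by auto
        then show False using disj abA unfolding color_class_def by auto
      qed
      have n2: "((a,c),(b,c)) \<notin> ?R"
      proof
        assume "((a,c),(b,c)) \<in> ?R"
        then have "(b,c) \<in> color_class B" using sub_ac by auto
        then show False using disj True unfolding color_class_def by auto
      qed
      have u: "\<And>z. ((a,c),(b,z)) \<notin> ?R \<and> ((a,c),(z,b)) \<notin> ?R"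
        using triangle_untouched[OF ir sy acE abE bcE n1 n2] by blast
      have "b \<in> span_vertices B" using sp True unfolding span_vertices_def by auto
      then obtain z where "(b,z) \<in> B \<or> (z,b) \<in> B" unfolding span_vertices_def by auto
      then show False using u cls_ac by auto
    next
      case False
      have n1: "((a,b),(a,c)) \<notin> ?R" using acA A p unfolding color_class_def by auto
      have n2: "((a,b),(c,b)) \<notin> ?R" using False A p by auto
      have u: "\<And>z. ((a,b),(c,z)) \<notin> ?R \<and> ((a,b),(z,c)) \<notin> ?R"
        using triangle_untouched[OF ir sy abE acE cbE n1 n2] by blast
      have "c \<in> span_vertices A" using sp acB
        unfolding span_vertices_def color_class_def by auto
      then obtain z where "(c,z) \<in> A \<or> (z,c) \<in> A" unfolding span_vertices_def by auto
      then show False using u A p by auto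
    qed
  qed
qed

end
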